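(* For every positive integer $n$, $\mathrm{Sort}_n(\mathrm{SC}_{\underline{32}1})=\mathrm{Av}_n(\underline{123},132)$; that is, $\tau\in\mathfrak S_n$ satisfies $s(\mathrm{SC}_{\underline{32}1}(\tau))=12\cdots n$ if and only if $\tau$ has no three consecutive entries $\tau_j<\tau_{j+1}<\tau_{j+2}$ and $\tau$ avoids the classical pattern $132$.
   Context: $\mathfrak S_n$ is the set of permutations of $\{1,\dots,n\}$. A vincular pattern is a permutation with some entries underlined; a sequence contains it if it has a subsequence with the same relative order in which entries corresponding to adjacent underlined entries occupy consecutive positions. E.g. an occurrence of $\underline{32}1$ is $a_j a_{j+1} a_l$ with $l>j+1$ and $a_l<a_{j+1}<a_j$. $\mathrm{Av}_n(\dots)$ is the set of permutations of $\mathfrak S_n$ avoiding all listed patterns. For a pattern $\sigma$, the map $\mathrm{SC}_\sigma$ acts on $\tau$: read entries left to right; when the next entry $x$ is read, if pushing $x$ yields a stack whose entries read top to bottom (stack adjacency = consecutive positions) avoid $\sigma$, push $x$; otherwise pop the top stack entry to the output and repeat. At the end pop all remaining entries to the output; the output is $\mathrm{SC}_\sigma(\tau)$. West's stack-sorting map is $s=\mathrm{SC}_{21}$. $\mathrm{Sort}_n(\mathrm{SC}_\sigma)=\{\tau\in\mathfrak S_n : s(\mathrm{SC}_\sigma(\tau))=12\cdots n\}$. *)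

theory Defs
  imports "HOL-Combinatorics.Multiset_Permutations"
begin

text \<open>A vincular pattern is a pair (p, U): p is a permutation (list), and i \<in> U means
  that pattern entries i and i+1 (0-based) are underlined together, i.e. the corresponding
  entries of an occurrence must sit at consecutive positions.\<close>

type_synonym vpattern = "nat list \<times> nat set"

definition contains :: "nat list \<Rightarrow> vpattern \<Rightarrow> bool" where
  "contains w \<sigma> \<longleftrightarrow> (let p = fst \<sigma>; U = snd \<sigma>; k = length p in
     (\<exists>idx :: nat list. length idx = k \<and> sorted_wrt (<) idx \<and>
        (\<forall>i \<in> set idx. i < length w) \<and>
        (\<forall>i<k. \<forall>j<k. (w ! (idx ! i) < w ! (idx ! j)) \<longleftrightarrow> (p ! i < p ! j)) \<and>
        (\<forall>i \<in> U. Suc i < k \<longrightarrow> idx ! Suc i = Suc (idx ! i))))"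

definition avoids :: "nat list \<Rightarrow> vpattern \<Rightarrow> bool" where
  "avoids w \<sigma> \<longleftrightarrow> \<not> contains w \<sigma>"

text \<open>Stack machine. Arguments: pattern, remaining input, stack (head = top), output so far.
  If the stack is empty and pushing is forbidden (impossible for patterns of length \<ge> 2),
  we push anyway.\<close>

function sc_aux :: "vpattern \<Rightarrow> nat list \<Rightarrow> nat list \<Rightarrow> nat list \<Rightarrow> nat list" where
  "sc_aux \<sigma> [] st out = out @ st"
| "sc_aux \<sigma> (x # xs) st out =
     (if avoids (x # st) \<sigma> then sc_aux \<sigma> xs (x # st) out
      else (case st of [] \<Rightarrow> sc_aux \<sigma> xs [x] out
                     | y # ys \<Rightarrow> sc_aux \<sigma> (x # xs) ys (out @ [y])))"
  by pat_completeness auto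
termination
  by (relation "measure (\<lambda>(\<sigma>, xs, st, out). 2 * length xs + length st)") auto

definition SC :: "vpattern \<Rightarrow> nat list \<Rightarrow> nat list" where
  "SC \<sigma> \<tau> = sc_aux \<sigma> \<tau> [] []"

definition pat_21 :: vpattern where "pat_21 = ([2,1], {})"
definition pat_u32_1 :: vpattern where "pat_u32_1 = ([3,2,1], {0})"
definition pat_u123 :: vpattern where "pat_u123 = ([1,2,3], {0,1})"
definition pat_132 :: vpattern where "pat_132 = ([1,3,2], {})"

definition west_s :: "nat list \<Rightarrow> nat list" where
  "west_s = SC pat_21"

definition Sort_n :: "nat \<Rightarrow> vpattern \<Rightarrow> nat list set" where
  "Sort_n n \<sigma> = {\<tau> \<in> permutations_of_set {1..n}. west_s (SC \<sigma> \<tau>) = [1..<Suc n]}"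

definition Av_n :: "nat \<Rightarrow> vpattern list \<Rightarrow> nat list set" where
  "Av_n n ps = {\<tau> \<in> permutations_of_set {1..n}. \<forall>\<sigma> \<in> set ps. avoids \<tau> \<sigma>}"

end

theory Submission
  imports Defs
begin

lemma all3: "(\<forall>i<(3::nat). P i) \<longleftrightarrow> P 0 \<and> P 1 \<and> P 2"
  by (auto simp: eval_nat_numeral less_Suc_eq)
lemma all2: "(\<forall>i<(2::nat). P i) \<longleftrightarrow> P 0 \<and> P 1"
  by (auto simp: eval_nat_numeral less_Suc_eq)
lemma allSuc: "(\<forall>i<Suc n. P i) \<longleftrightarrow> P 0 \<and> (\<forall>i<n. P (Suc i))"
  by (auto simp: less_Suc_eq_0_disj)
lemma len3: "length xs = 3 \<longleftrightarrow> (\<exists>a b c. xs = [a,b,c])"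
  by (auto simp: eval_nat_numeral length_Suc_conv)
lemma len2: "length xs = 2 \<longleftrightarrow> (\<exists>a b. xs = [a,b])"
  by (auto simp: eval_nat_numeral length_Suc_conv)

lemma contains3: "contains w ([p0,p1,p2], U) \<longleftrightarrow>
  (\<exists>i j k. i < j \<and> j < k \<and> k < length w \<and>
     ((w!i < w!j) = (p0 < p1)) \<and> ((w!i < w!k) = (p0 < p2)) \<and> ((w!j < w!i) = (p1 < p0)) \<and>
     ((w!j < w!k) = (p1 < p2)) \<and> ((w!k < w!i) = (p2 < p0)) \<and> ((w!k < w!j) = (p2 < p1)) \<and>
     (0 \<in> U \<longrightarrow> j = Suc i) \<and> (1 \<in> U \<longrightarrow> k = Suc j))" (is "?L \<longleftrightarrow> ?R")
proof
  assume "contains w ([p0,p1,p2], U)"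
  then obtain idx where A: "length idx = length [p0,p1,p2]" "sorted_wrt (<) idx" "\<forall>i\<in>set idx. i < length w"
    "\<forall>i<length [p0,p1,p2]. \<forall>j<length [p0,p1,p2]. (w ! (idx ! i) < w ! (idx ! j)) \<longleftrightarrow> ([p0,p1,p2] ! i < [p0,p1,p2] ! j)"
    "\<forall>i \<in> U. Suc i < length [p0,p1,p2] \<longrightarrow> idx ! Suc i = Suc (idx ! i)"
    unfolding contains_def Let_def fst_conv snd_conv by blast
  from A(1) obtain a b c where idx: "idx = [a,b,c]" by (auto simp: length_Suc_conv)
  have o: "\<And>i j. i<3 \<Longrightarrow> j<3 \<Longrightarrow> (w!([a,b,c]!i) < w!([a,b,c]!j)) = ([p0,p1,p2]!i < [p0,p1,p2]!j)"
    using A(4) unfolding idx by simp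
  have s: "a < b" "b < c" "c < length w" using A(2,3) unfolding idx by auto
  have u: "0 \<in> U \<longrightarrow> b = Suc a" "1 \<in> U \<longrightarrow> c = Suc b" using A(5) unfolding idx by auto
  show ?R
    apply (rule exI[of _ a], rule exI[of _ b], rule exI[of _ c])
    using s u o[of 0 1] o[of 0 2] o[of 1 0] o[of 1 2] o[of 2 0] o[of 2 1] by simp
next
  assume "\<exists>i j k. i < j \<and> j < k \<and> k < length w \<and>
     ((w!i < w!j) = (p0 < p1)) \<and> ((w!i < w!k) = (p0 < p2)) \<and> ((w!j < w!i) = (p1 < p0)) \<and>
     ((w!j < w!k) = (p1 < p2)) \<and> ((w!k < w!i) = (p2 < p0)) \<and> ((w!k < w!j) = (p2 < p1)) \<and>
     (0 \<in> U \<longrightarrow> j = Suc i) \<and> (1 \<in> U \<longrightarrow> k = Suc j)"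
  then obtain i j k where h: "i < j \<and> j < k \<and> k < length w \<and>
     ((w!i < w!j) = (p0 < p1)) \<and> ((w!i < w!k) = (p0 < p2)) \<and> ((w!j < w!i) = (p1 < p0)) \<and>
     ((w!j < w!k) = (p1 < p2)) \<and> ((w!k < w!i) = (p2 < p0)) \<and> ((w!k < w!j) = (p2 < p1)) \<and>
     (0 \<in> U \<longrightarrow> j = Suc i) \<and> (1 \<in> U \<longrightarrow> k = Suc j)" by blast
  have "\<forall>u\<in>U. Suc u < 3 \<longrightarrow> [i,j,k] ! Suc u = Suc ([i,j,k] ! u)"
  proof (intro ballI impI)
    fix u assume "u \<in> U" "Suc u < 3"
    then have "u = 0 \<or> u = 1" by auto
    then show "[i,j,k] ! Suc u = Suc ([i,j,k] ! u)" using h \<open>u \<in> U\<close> by auto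
  qed
  then show "contains w ([p0,p1,p2], U)" unfolding contains_def Let_def
    apply (intro exI[of _ "[i,j,k]"])
    using h by (simp add: allSuc)
qed

lemma contains2: "contains w ([p0,p1], U) \<longleftrightarrow>
  (\<exists>i j. i < j \<and> j < length w \<and>
     ((w!i < w!j) = (p0 < p1)) \<and> ((w!j < w!i) = (p1 < p0)) \<and>
     (0 \<in> U \<longrightarrow> j = Suc i))" (is "?L \<longleftrightarrow> ?R")
proof
  assume "contains w ([p0,p1], U)"
  then obtain idx where A: "length idx = length [p0,p1]" "sorted_wrt (<) idx" "\<forall>i\<in>set idx. i < length w"
    "\<forall>i<length [p0,p1]. \<forall>j<length [p0,p1]. (w ! (idx ! i) < w ! (idx ! j)) \<longleftrightarrow> ([p0,p1] ! i < [p0,p1] ! j)"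
    "\<forall>i \<in> U. Suc i < length [p0,p1] \<longrightarrow> idx ! Suc i = Suc (idx ! i)"
    unfolding contains_def Let_def fst_conv snd_conv by blast
  from A(1) obtain a b where idx: "idx = [a,b]" by (auto simp: length_Suc_conv)
  have o: "\<And>i j. i<2 \<Longrightarrow> j<2 \<Longrightarrow> (w!([a,b]!i) < w!([a,b]!j)) = ([p0,p1]!i < [p0,p1]!j)"
    using A(4) unfolding idx by simp
  have s: "a < b" "b < length w" using A(2,3) unfolding idx by auto
  have u: "0 \<in> U \<longrightarrow> b = Suc a" using A(5) unfolding idx by auto
  show ?R
    apply (rule exI[of _ a], rule exI[of _ b])
    using s u o[of 0 1] o[of 1 0] by simp
next
  assume "\<exists>i j. i < j \<and> j < length w \<and>
     ((w!i < w!j) = (p0 < p1)) \<and> ((w!j < w!i) = (p1 < p0)) \<and>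
     (0 \<in> U \<longrightarrow> j = Suc i)"
  then obtain i j where h: "i < j \<and> j < length w \<and>
     ((w!i < w!j) = (p0 < p1)) \<and> ((w!j < w!i) = (p1 < p0)) \<and>
     (0 \<in> U \<longrightarrow> j = Suc i)" by blast
  have "\<forall>u\<in>U. Suc u < 2 \<longrightarrow> [i,j] ! Suc u = Suc ([i,j] ! u)"
  proof (intro ballI impI)
    fix u assume "u \<in> U" "Suc u < 2"
    then have "u = 0" by auto
    then show "[i,j] ! Suc u = Suc ([i,j] ! u)" using h \<open>u \<in> U\<close> by auto
  qed
  then show "contains w ([p0,p1], U)" unfolding contains_def Let_def
    apply (intro exI[of _ "[i,j]"])
    using h by (simp add: allSuc)
qed

lemma c21: "contains w pat_21 \<longleftrightarrow> (\<exists>i j. i < j \<and> j < length w \<and> w!j < w!i)"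
  unfolding pat_21_def contains2 by (auto dest: less_not_sym)
lemma cu321: "contains w pat_u32_1 \<longleftrightarrow> (\<exists>j l. Suc j < l \<and> l < length w \<and> w!l < w!Suc j \<and> w!Suc j < w!j)"
  unfolding pat_u32_1_def contains3 by (auto dest: less_not_sym; blast dest: less_not_sym intro: less_trans)
lemma cu123: "contains w pat_u123 \<longleftrightarrow> (\<exists>i. Suc (Suc i) < length w \<and> w!i < w!Suc i \<and> w!Suc i < w!Suc (Suc i))"
  unfolding pat_u123_def contains3 by (auto dest: less_not_sym; blast dest: less_not_sym intro: less_trans)
lemma c132: "contains w pat_132 \<longleftrightarrow> (\<exists>i j k. i < j \<and> j < k \<and> k < length w \<and> w!i < w!k \<and> w!k < w!j)"
  unfolding pat_132_def contains3 by (auto dest: less_not_sym; blast dest: less_not_sym intro: less_trans)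


fun sub2 :: "nat list \<Rightarrow> nat \<Rightarrow> nat \<Rightarrow> bool" where
  "sub2 [] a b = False"
| "sub2 (y # w) a b = ((y = a \<and> b \<in> set w) \<or> sub2 w a b)"

fun sub3 :: "nat list \<Rightarrow> nat \<Rightarrow> nat \<Rightarrow> nat \<Rightarrow> bool" where
  "sub3 [] a b c = False"
| "sub3 (y # w) a b c = ((y = a \<and> sub2 w b c) \<or> sub3 w a b c)"

lemma sub2_append: "sub2 (u @ v) a b \<longleftrightarrow> sub2 u a b \<or> sub2 v a b \<or> (a \<in> set u \<and> b \<in> set v)"
  by (induction u) auto

lemma sub3_append: "sub3 (u @ v) a b c \<longleftrightarrow> sub3 u a b c \<or> sub3 v a b c \<or> (sub2 u a b \<and> c \<in> set v) \<or> (a \<in> set u \<and> sub2 v b c)"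
  by (induction u) (auto simp: sub2_append)

lemma sub2_rev: "sub2 (rev w) a b \<longleftrightarrow> sub2 w b a"
  by (induction w) (auto simp: sub2_append)

lemma sub3_rev: "sub3 (rev w) a b c \<longleftrightarrow> sub3 w c b a"
  by (induction w) (auto simp: sub3_append sub2_rev)

lemma sub2_idx: "sub2 w a b \<longleftrightarrow> (\<exists>i j. i < j \<and> j < length w \<and> w!i = a \<and> w!j = b)"
proof (induction w)
  case Nil then show ?case by simp
next
  case (Cons y w)
  show ?case
  proof
    assume "sub2 (y # w) a b"
    then consider "y = a" "b \<in> set w" | "sub2 w a b" by auto
    then show "\<exists>i j. i < j \<and> j < length (y#w) \<and> (y#w)!i = a \<and> (y#w)!j = b"
    proof cases
      case 1
      then obtain j where "j < length w" "w!j = b" by (auto simp: in_set_conv_nth)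
      then show ?thesis using 1 by (intro exI[of _ 0] exI[of _ "Suc j"]) auto
    next
      case 2
      then obtain i j where "i < j \<and> j < length w \<and> w!i = a \<and> w!j = b" using Cons.IH by blast
      then show ?thesis by (intro exI[of _ "Suc i"] exI[of _ "Suc j"]) auto
    qed
  next
    assume "\<exists>i j. i < j \<and> j < length (y#w) \<and> (y#w)!i = a \<and> (y#w)!j = b"
    then obtain i j where h: "i < j" "j < length (y#w)" "(y#w)!i = a" "(y#w)!j = b" by blast
    then obtain j' where j': "j = Suc j'" by (cases j) auto
    show "sub2 (y # w) a b"
    proof (cases i)
      case 0
      then show ?thesis using h j' by (auto simp: in_set_conv_nth)
    next
      case (Suc i')
      then have "sub2 w a b" using Cons.IH h j' by (intro Cons.IH[THEN iffD2] exI[of _ i'] exI[of _ j']) auto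
      then show ?thesis by simp
    qed
  qed
qed

lemma sub3_idx: "sub3 w a b c \<longleftrightarrow> (\<exists>i j k. i < j \<and> j < k \<and> k < length w \<and> w!i = a \<and> w!j = b \<and> w!k = c)"
proof (induction w)
  case Nil then show ?case by simp
next
  case (Cons y w)
  show ?case
  proof
    assume "sub3 (y # w) a b c"
    then consider "y = a" "sub2 w b c" | "sub3 w a b c" by auto
    then show "\<exists>i j k. i < j \<and> j < k \<and> k < length (y#w) \<and> (y#w)!i = a \<and> (y#w)!j = b \<and> (y#w)!k = c"
    proof cases
      case 1
      then obtain j k where "j < k \<and> k < length w \<and> w!j = b \<and> w!k = c" by (auto simp: sub2_idx)
      then show ?thesis using 1 by (intro exI[of _ 0] exI[of _ "Suc j"] exI[of _ "Suc k"]) auto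
    next
      case 2
      then obtain i j k where "i < j \<and> j < k \<and> k < length w \<and> w!i = a \<and> w!j = b \<and> w!k = c" using Cons.IH by blast
      then show ?thesis by (intro exI[of _ "Suc i"] exI[of _ "Suc j"] exI[of _ "Suc k"]) auto
    qed
  next
    assume "\<exists>i j k. i < j \<and> j < k \<and> k < length (y#w) \<and> (y#w)!i = a \<and> (y#w)!j = b \<and> (y#w)!k = c"
    then obtain i j k where h: "i < j" "j < k" "k < length (y#w)" "(y#w)!i = a" "(y#w)!j = b" "(y#w)!k = c" by blast
    then obtain j' where j': "j = Suc j'" by (cases j) auto
    from h j' obtain k' where k': "k = Suc k'" by (cases k) auto
    show "sub3 (y # w) a b c"
    proof (cases i)
      case 0
      then have "sub2 w b c" using h j' k' by (intro sub2_idx[THEN iffD2] exI[of _ j'] exI[of _ k']) auto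
      then show ?thesis using 0 h by auto
    next
      case (Suc i')
      then have "sub3 w a b c" using h j' k' by (intro Cons.IH[THEN iffD2] exI[of _ i'] exI[of _ j'] exI[of _ k']) auto
      then show ?thesis by simp
    qed
  qed
qed

definition no231 :: "nat list \<Rightarrow> bool" where
  "no231 w \<longleftrightarrow> \<not> (\<exists>a b c. a < b \<and> b < c \<and> sub3 w b c a)"

lemma no231_Nil[simp]: "no231 []" by (simp add: no231_def)
lemma no231_Cons: "no231 (x # xs) \<longleftrightarrow> no231 xs \<and> \<not> (\<exists>c a. a < x \<and> x < c \<and> sub2 xs c a)"
  by (auto simp: no231_def)

lemma sorted_no_sub2: "sorted_wrt (<) st \<Longrightarrow> sub2 st a b \<Longrightarrow> a < b"
  by (induction st) auto

lemma sub2_set: "sub2 w a b \<Longrightarrow> a \<in> set w \<and> b \<in> set w"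
  by (induction w) auto

lemma c21_sub2: "contains w pat_21 \<longleftrightarrow> (\<exists>a b. b < a \<and> sub2 w a b)"
  unfolding c21 sub2_idx by blast

lemma avoids21_push: "sorted_wrt (<) st \<Longrightarrow> avoids (x # st) pat_21 \<longleftrightarrow> (\<forall>y\<in>set st. \<not> y < x)"
  unfolding avoids_def c21_sub2 by (auto dest: sorted_no_sub2)

lemma sc_aux_out: "\<exists>r. sc_aux \<sigma> xs st out = out @ r \<and> mset r = mset xs + mset st"
proof (induction \<sigma> xs st out rule: sc_aux.induct)
  case (1 \<sigma> st out) then show ?case by simp
next
  case (2 \<sigma> x xs st out)
  show ?case
  proof (cases "avoids (x # st) \<sigma>")
    case True then show ?thesis using 2(1) by auto
  next
    case False
    show ?thesis
    proof (cases st)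
      case Nil then show ?thesis using 2(2) False by auto
    next
      case (Cons y ys)
      from 2(3)[OF False Cons] obtain r where "sc_aux \<sigma> (x # xs) ys (out @ [y]) = (out @ [y]) @ r"
        "mset r = mset (x#xs) + mset ys" by blast
      then show ?thesis using False Cons by (intro exI[of _ "y # r"]) auto
    qed
  qed
qed

lemma prop_helper: "(A \<and> S \<and> C \<longleftrightarrow> R1 \<and> R2 \<and> R3) \<Longrightarrow> (S \<and> A \<and> N \<and> C \<longleftrightarrow> R1 \<and> R2 \<and> N \<and> R3)"
  by blast

lemma knuth_inv:
  assumes "\<sigma> = pat_21" "sorted_wrt (<) st" "distinct (out @ st @ xs)"
  shows "sorted (sc_aux \<sigma> xs st out) \<longleftrightarrow>
    sorted out \<and> (\<forall>q\<in>set out. \<forall>z\<in>set st \<union> set xs. q < z) \<and> no231 xs \<and>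
    \<not> (\<exists>b\<in>set st. \<exists>c a. a < b \<and> b < c \<and> sub2 xs c a)"
  using assms
proof (induction \<sigma> xs st out rule: sc_aux.induct)
  case (1 \<sigma> st out)
  have "sorted st" using 1(2) using strict_sorted_imp_sorted by blast
  have "sorted (out @ st) \<longleftrightarrow> sorted out \<and> (\<forall>q\<in>set out. \<forall>z\<in>set st. q \<le> z)"
    using \<open>sorted st\<close> by (simp add: sorted_append)
  also have "\<dots> \<longleftrightarrow> sorted out \<and> (\<forall>q\<in>set out. \<forall>z\<in>set st. q < z)"
    using 1(3) by (auto simp: order_le_less)
  finally show ?case by simp
next
  case (2 \<sigma> x xs st out)
  show ?case
  proof (cases "avoids (x # st) \<sigma>")
    case True
    then have xl: "\<forall>y\<in>set st. x < y" using 2(4,5,6) avoids21_push by fastforce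
    have "sorted_wrt (<) (x # st)" using xl 2(5) by simp
    moreover have "distinct (out @ (x # st) @ xs)" using 2(6) by auto
    ultimately have IH: "sorted (sc_aux \<sigma> xs (x # st) out) \<longleftrightarrow>
      sorted out \<and> (\<forall>q\<in>set out. \<forall>z\<in>set (x#st) \<union> set xs. q < z) \<and> no231 xs \<and>
      \<not> (\<exists>b\<in>set (x#st). \<exists>c a. a < b \<and> b < c \<and> sub2 xs c a)" using 2(1)[OF True 2(4)] by blast
    show ?thesis using True IH xl by (auto simp: no231_Cons)
  next
    case False
    show ?thesis
    proof (cases st)
      case Nil then show ?thesis using False 2(4) avoids21_push by auto
    next
      case (Cons y ys)
      have yx: "y < x" using False Cons 2(4,5,6) avoids21_push
        by (metis (no_types, lifting) distinct_append insert_iff list.set(2) not_less_iff_gr_or_eq sorted_wrt.simps(2) less_trans)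
      have "sorted_wrt (<) ys" using 2(5) Cons by simp
      moreover have "distinct ((out @ [y]) @ ys @ (x # xs))" using 2(6) Cons by auto
      ultimately have IH: "sorted (sc_aux \<sigma> (x#xs) ys (out @ [y])) \<longleftrightarrow>
        sorted (out @ [y]) \<and> (\<forall>q\<in>set (out @ [y]). \<forall>z\<in>set ys \<union> set (x#xs). q < z) \<and> no231 (x#xs) \<and>
        \<not> (\<exists>b\<in>set ys. \<exists>c a. a < b \<and> b < c \<and> sub2 (x#xs) c a)" using 2(3)[OF False Cons 2(4)] by blast
      have ylt: "\<forall>z\<in>set ys. y < z" using 2(5) Cons by simp
      have d: "y \<notin> set xs" "y \<noteq> x" using 2(6) Cons by auto
      have yo: "y \<notin> set out" using 2(6) Cons by auto
      have step: "sc_aux \<sigma> (x#xs) st out = sc_aux \<sigma> (x#xs) ys (out@[y])" using False Cons by simp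
      have L: "(\<forall>q\<in>set out. \<forall>z\<in>set st \<union> set (x#xs). q < z) \<and> sorted out \<and>
          \<not> (\<exists>b\<in>set st. \<exists>c a. a < b \<and> b < c \<and> sub2 (x#xs) c a)
       \<longleftrightarrow> sorted (out @ [y]) \<and> (\<forall>q\<in>set (out @ [y]). \<forall>z\<in>set ys \<union> set (x#xs). q < z) \<and>
        \<not> (\<exists>b\<in>set ys. \<exists>c a. a < b \<and> b < c \<and> sub2 (x#xs) c a)"
      proof
        assume A: "(\<forall>q\<in>set out. \<forall>z\<in>set st \<union> set (x#xs). q < z) \<and> sorted out \<and>
          \<not> (\<exists>b\<in>set st. \<exists>c a. a < b \<and> b < c \<and> sub2 (x#xs) c a)"
        have yxs: "\<forall>z\<in>set xs. y < z"
        proof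
          fix z assume "z \<in> set xs"
          then have "sub2 (x#xs) x z" by simp
          then have "\<not> z < y" using A yx Cons by auto
          then show "y < z" using d \<open>z \<in> set xs\<close> by (metis linorder_neqE_nat)
        qed
        show "sorted (out @ [y]) \<and> (\<forall>q\<in>set (out @ [y]). \<forall>z\<in>set ys \<union> set (x#xs). q < z) \<and>
          \<not> (\<exists>b\<in>set ys. \<exists>c a. a < b \<and> b < c \<and> sub2 (x#xs) c a)"
          using A yxs yx ylt Cons by (auto simp: sorted_append less_imp_le)
      next
        assume A: "sorted (out @ [y]) \<and> (\<forall>q\<in>set (out @ [y]). \<forall>z\<in>set ys \<union> set (x#xs). q < z) \<and>
          \<not> (\<exists>b\<in>set ys. \<exists>c a. a < b \<and> b < c \<and> sub2 (x#xs) c a)"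
        have oy: "\<forall>q\<in>set out. q < y" using A yo by (auto simp: sorted_append order_le_less)
        have "\<not> (\<exists>c a. a < y \<and> y < c \<and> sub2 (x#xs) c a)"
        proof
          assume "\<exists>c a. a < y \<and> y < c \<and> sub2 (x#xs) c a"
          then obtain c a where "a < y" "sub2 (x#xs) c a" by blast
          then have "a \<in> set (x#xs)" using sub2_set by blast
          moreover have "\<forall>z\<in>set ys \<union> set (x#xs). y < z"
            using A[THEN conjunct2, THEN conjunct1] by simp
          ultimately have "y < a" by blast
          then show False using \<open>a < y\<close> by simp
        qed
        then show "(\<forall>q\<in>set out. \<forall>z\<in>set st \<union> set (x#xs). q < z) \<and> sorted out \<and>
          \<not> (\<exists>b\<in>set st. \<exists>c a. a < b \<and> b < c \<and> sub2 (x#xs) c a)"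
          using A oy Cons by (auto simp: sorted_append)
      qed
      show ?thesis unfolding step IH by (rule prop_helper[OF L, symmetric])
    qed
  qed
qed



lemma cu321_push: "contains (x # st) pat_u32_1 \<longleftrightarrow>
   contains st pat_u32_1 \<or> (\<exists>y ys. st = y # ys \<and> y < x \<and> (\<exists>c\<in>set ys. c < y))"
proof
  assume "contains (x # st) pat_u32_1"
  then obtain j l where h: "Suc j < l" "l < length (x#st)" "(x#st)!l < (x#st)!Suc j" "(x#st)!Suc j < (x#st)!j"
    unfolding cu321 by blast
  show "contains st pat_u32_1 \<or> (\<exists>y ys. st = y # ys \<and> y < x \<and> (\<exists>c\<in>set ys. c < y))"
  proof (cases j)
    case 0
    obtain l' where l': "l = Suc (Suc l')" using h(1) 0 by (cases l; cases "l - 1") auto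
    obtain y ys where st: "st = y # ys" using h(2) l' by (cases st) auto
    have "ys ! l' \<in> set ys" using h(2) l' st by simp
    moreover have "ys!l' < y" using h(3) l' st 0 by simp
    moreover have "y < x" using h(4) st 0 by simp
    ultimately show ?thesis using st by blast
  next
    case (Suc j')
    obtain l' where l': "l = Suc l'" using h(1) by (cases l) auto
    have "contains st pat_u32_1" unfolding cu321
      using h l' Suc by (intro exI[of _ j'] exI[of _ l']) simp
    then show ?thesis by blast
  qed
next
  assume "contains st pat_u32_1 \<or> (\<exists>y ys. st = y # ys \<and> y < x \<and> (\<exists>c\<in>set ys. c < y))"
  then show "contains (x # st) pat_u32_1"
  proof
    assume "contains st pat_u32_1"
    then obtain j l where h: "Suc j < l" "l < length st" "st!l < st!Suc j" "st!Suc j < st!j"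
      unfolding cu321 by blast
    show ?thesis unfolding cu321 using h by (intro exI[of _ "Suc j"] exI[of _ "Suc l"]) simp
  next
    assume "\<exists>y ys. st = y # ys \<and> y < x \<and> (\<exists>c\<in>set ys. c < y)"
    then obtain y ys c where h: "st = y # ys" "y < x" "c \<in> set ys" "c < y" by blast
    then obtain k where k: "k < length ys" "ys ! k = c" by (auto simp: in_set_conv_nth)
    show ?thesis unfolding cu321 using h k by (intro exI[of _ 0] exI[of _ "Suc (Suc k)"]) simp
  qed
qed

lemma avoids_push: "avoids (x # st) pat_u32_1 \<longleftrightarrow>
   avoids st pat_u32_1 \<and> \<not> (\<exists>y ys. st = y # ys \<and> y < x \<and> (\<exists>c\<in>set ys. c < y))"
  unfolding avoids_def cu321_push by blast

lemma avoids_tl: "avoids (x # st) pat_u32_1 \<Longrightarrow> avoids st pat_u32_1"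
  using avoids_push by blast

lemma avoids_Nil: "avoids [] pat_u32_1"
  unfolding avoids_def cu321 by simp

lemma stack_before:
  "st = u @ m # v \<Longrightarrow> x \<in> set u \<Longrightarrow> sub2 (sc_aux \<sigma> xs st out) x m"
proof (induction \<sigma> xs st out arbitrary: u rule: sc_aux.induct)
  case (1 \<sigma> st out)
  then show ?case by (auto simp: sub2_append)
next
  case (2 \<sigma> x' xs st out)
  show ?case
  proof (cases "avoids (x' # st) \<sigma>")
    case True
    have "sub2 (sc_aux \<sigma> xs (x' # st) out) x m"
      using 2(1)[OF True, of "x' # u"] 2(4,5) by simp
    then show ?thesis using True by simp
  next
    case False
    have "st \<noteq> []" using 2(4) by simp
    then obtain y ys where st: "st = y # ys" by (cases st) auto
    obtain u' where u: "u = y # u'" using 2(4,5) st by (cases u) auto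
    have step: "sc_aux \<sigma> (x'#xs) st out = sc_aux \<sigma> (x'#xs) ys (out@[y])" using False st by simp
    show ?thesis
    proof (cases "x = y")
      case True
      obtain r where r: "sc_aux \<sigma> (x'#xs) ys (out@[y]) = (out @ [y]) @ r" "mset r = mset (x'#xs) + mset ys"
        using sc_aux_out by blast
      have "m \<in> set ys" using 2(4) st u by auto
      then have "m \<in> set r" using arg_cong[OF r(2), of set_mset] by simp
      then show ?thesis unfolding step r(1) using True by (auto simp: sub2_append)
    next
      case False'': False
      have "sub2 (sc_aux \<sigma> (x'#xs) ys (out@[y])) x m"
        using 2(3)[OF False st, of u'] 2(4,5) st u False'' by simp
      then show ?thesis unfolding step .
    qed
  qed
qed

lemma min_stays:
  "avoids st pat_u32_1 \<Longrightarrow> m \<in> set st \<Longrightarrow> (\<forall>z\<in>set st. z \<noteq> m \<longrightarrow> m < z) \<Longrightarrow>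
   sub2 (sc_aux pat_u32_1 (x # xs) st out) x m"
proof (induction st arbitrary: out)
  case Nil then show ?case by simp
next
  case (Cons y ys)
  show ?case
  proof (cases "avoids (x # y # ys) pat_u32_1")
    case True
    obtain u v where uv: "y # ys = u @ m # v" using Cons(3) by (meson split_list)
    have "sub2 (sc_aux pat_u32_1 xs (x # y # ys) out) x m"
      by (rule stack_before[of _ "x # u" m v]) (simp_all add: uv)
    then show ?thesis using True by simp
  next
    case False
    then have c: "y < x \<and> (\<exists>c\<in>set ys. c < y)" using Cons(2) avoids_push by blast
    have "y \<noteq> m"
    proof
      assume "y = m"
      then obtain c where "c \<in> set ys" "c < m" using c by blast
      then show False using Cons(4) by fastforce
    qed
    then have "m \<in> set ys" using Cons(3) by simp
    moreover have "avoids ys pat_u32_1" using Cons(2) avoids_tl by blast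
    moreover have "\<forall>z\<in>set ys. z \<noteq> m \<longrightarrow> m < z" using Cons(4) by simp
    ultimately have "sub2 (sc_aux pat_u32_1 (x # xs) ys (out @ [y])) x m" using Cons(1) by blast
    then show ?thesis using False by simp
  qed
qed

definition has1u23 :: "nat list \<Rightarrow> bool" where
  "has1u23 w \<longleftrightarrow> (\<exists>i j. i < j \<and> Suc j < length w \<and> w!i < w!j \<and> w!j < w!Suc j)"

lemma has1u23_prefix: "\<not> has1u23 (w @ [x]) \<Longrightarrow> \<not> has1u23 w"
proof
  assume "has1u23 w"
  then obtain i j where h: "i < j" "Suc j < length w" "w!i < w!j" "w!j < w!Suc j" unfolding has1u23_def by blast
  have "has1u23 (w @ [x])" unfolding has1u23_def
    using h by (intro exI[of _ i] exI[of _ j]) (auto simp: nth_append)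
  moreover assume "\<not> has1u23 (w @ [x])"
  ultimately show False by blast
qed

lemma no_pop:
  "\<not> has1u23 w \<Longrightarrow> sc_aux pat_u32_1 (w @ xs) [] out = sc_aux pat_u32_1 xs (rev w) out \<and> avoids (rev w) pat_u32_1"
proof (induction w arbitrary: xs rule: rev_induct)
  case Nil then show ?case using avoids_Nil by simp
next
  case (snoc x w)
  have nw: "\<not> has1u23 w" using snoc(2) has1u23_prefix by blast
  have IH: "sc_aux pat_u32_1 (w @ (x # xs)) [] out = sc_aux pat_u32_1 (x # xs) (rev w) out"
     "avoids (rev w) pat_u32_1" using snoc(1)[OF nw] by blast+
  have "\<not> (\<exists>y ys. rev w = y # ys \<and> y < x \<and> (\<exists>c\<in>set ys. c < y))"
  proof
    assume "\<exists>y ys. rev w = y # ys \<and> y < x \<and> (\<exists>c\<in>set ys. c < y)"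
    then obtain y ys c where h: "rev w = y # ys" "y < x" "c \<in> set ys" "c < y" by blast
    have w: "w = rev ys @ [y]" using arg_cong[OF h(1), of rev] by simp
    have "c \<in> set (rev ys)" using h(3) by simp
    then obtain i where i: "i < length (rev ys)" "rev ys ! i = c" unfolding in_set_conv_nth by blast
    have "has1u23 (w @ [x])" unfolding has1u23_def w
      using i h by (intro exI[of _ i] exI[of _ "length (rev ys)"]) (auto simp: nth_append)
    then show False using snoc(2) by blast
  qed
  then have av: "avoids (x # rev w) pat_u32_1" using IH(2) avoids_push by blast
  show ?case using IH av by simp
qed

lemma first_pop:
  "has1u23 w \<Longrightarrow> \<not> no231 (sc_aux pat_u32_1 (w @ xs) [] [])"
proof (induction w arbitrary: xs rule: rev_induct)
  case Nil then show ?case by (simp add: has1u23_def)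
next
  case (snoc x w)
  show ?case
  proof (cases "has1u23 w")
    case True
    then show ?thesis using snoc(1)[of "x # xs"] by simp
  next
    case False
    have NP: "sc_aux pat_u32_1 (w @ (x # xs)) [] [] = sc_aux pat_u32_1 (x # xs) (rev w) []"
      "avoids (rev w) pat_u32_1" using no_pop[OF False] by blast+
    obtain i j where ij: "i < j" "Suc j < length (w @ [x])" "(w @ [x])!i < (w @ [x])!j" "(w @ [x])!j < (w @ [x])!Suc j"
      using snoc(2) unfolding has1u23_def by blast
    have jl: "Suc j = length w"
    proof (rule ccontr)
      assume "Suc j \<noteq> length w"
      then have "Suc j < length w" using ij(2) by simp
      then have "has1u23 w" unfolding has1u23_def using ij
        by (intro exI[of _ i] exI[of _ j]) (auto simp: nth_append)
      then show False using False by blast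
    qed
    define p where "p = take j w"
    define t where "t = w ! j"
    define e where "e = w ! i"
    have w: "w = p @ [t]" unfolding p_def t_def using take_Suc_conv_app_nth[of j w] jl by simp
    have e: "e \<in> set p"
    proof -
      have "take j w ! i = w ! i" using ij(1) by simp
      moreover have "i < length (take j w)" using ij(1) jl by simp
      moreover have "take j w ! i \<in> set (take j w)" using \<open>i < length (take j w)\<close> by (rule nth_mem)
      ultimately show ?thesis unfolding e_def p_def by simp
    qed
    have et: "e < t" using ij jl unfolding e_def t_def by (auto simp: nth_append)
    have tx: "t < x" using ij jl unfolding t_def by (auto simp: nth_append)
    have rw: "rev w = t # rev p" using w by simp
    have npush: "\<not> avoids (x # t # rev p) pat_u32_1" using avoids_push e et tx by auto
    have step: "sc_aux pat_u32_1 (x # xs) (rev w) [] = sc_aux pat_u32_1 (x # xs) (rev p) [t]"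
      using npush rw by simp
    define m where "m = Min (set p)"
    have mp: "m \<in> set (rev p)" unfolding m_def set_rev using e by (intro Min_in) auto
    have me: "m \<le> e" unfolding m_def using e Min_le[of "set p" e] by simp
    have mmin: "\<forall>z\<in>set (rev p). z \<noteq> m \<longrightarrow> m < z"
    proof (intro ballI impI)
      fix z assume z: "z \<in> set (rev p)" "z \<noteq> m"
      then have "m \<le> z" unfolding m_def using Min_le[of "set p" z] by simp
      then show "m < z" using z(2) by simp
    qed
    have avp: "avoids (rev p) pat_u32_1" using NP(2) unfolding rw by (rule avoids_tl)
    have S: "sub2 (sc_aux pat_u32_1 (x # xs) (rev p) [t]) x m"
      by (rule min_stays[OF avp mp mmin])
    obtain r where r: "sc_aux pat_u32_1 (x # xs) (rev p) [t] = [t] @ r" using sc_aux_out by blast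
    have "sub2 r x m" using S tx unfolding r by simp
    then have "sub3 (t # r) t x m" by simp
    moreover have "m < t" using me et by simp
    ultimately have "\<not> no231 (t # r)" unfolding no231_def using tx by blast
    then show ?thesis using NP(1) step r by simp
  qed
qed



lemma u123_imp: "contains w pat_u123 \<Longrightarrow> has1u23 w"
  unfolding cu123 has1u23_def by (metis lessI)

lemma has1u23_split:
  assumes "distinct w" "has1u23 w"
  shows "contains w pat_u123 \<or> contains w pat_132"
proof -
  obtain i j where h: "i < j" "Suc j < length w" "w!i < w!j" "w!j < w!Suc j"
    using assms(2) unfolding has1u23_def by blast
  show ?thesis
  proof (cases "Suc i = j")
    case True
    then have "contains w pat_u123" unfolding cu123 using h by (intro exI[of _ i]) simp
    then show ?thesis by blast
  next
    case False
    then obtain k where k: "j = Suc k" "i < k" using h(1) by (cases j) auto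
    have kne: "w!k \<noteq> w!j" using assms(1) h(2) k(1) by (simp add: nth_eq_iff_index_eq)
    show ?thesis
    proof (cases "w!k < w!j")
      case True
      then have "contains w pat_u123" unfolding cu123 using h k by (intro exI[of _ k]) simp
      then show ?thesis by blast
    next
      case False
      then have "w!j < w!k" using kne by simp
      then have "contains w pat_132" unfolding c132 using h k
        by (intro exI[of _ i] exI[of _ k] exI[of _ j]) simp
      then show ?thesis by blast
    qed
  qed
qed

lemma c132_sub3: "contains w pat_132 \<longleftrightarrow> (\<exists>a b c. a < b \<and> b < c \<and> sub3 w a c b)"
  unfolding c132 sub3_idx by blast

lemma no231_rev: "no231 (rev w) \<longleftrightarrow> \<not> contains w pat_132"
  unfolding no231_def c132_sub3 sub3_rev by blast

lemma main_char:
  assumes "distinct \<tau>"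
  shows "no231 (SC pat_u32_1 \<tau>) \<longleftrightarrow> avoids \<tau> pat_u123 \<and> avoids \<tau> pat_132"
proof (cases "has1u23 \<tau>")
  case True
  have "\<not> no231 (sc_aux pat_u32_1 (\<tau> @ []) [] [])" by (rule first_pop[OF True])
  then have "\<not> no231 (SC pat_u32_1 \<tau>)" unfolding SC_def by simp
  moreover have "\<not> (avoids \<tau> pat_u123 \<and> avoids \<tau> pat_132)"
    using has1u23_split[OF assms True] unfolding avoids_def by blast
  ultimately show ?thesis by blast
next
  case False
  have "sc_aux pat_u32_1 (\<tau> @ []) [] [] = sc_aux pat_u32_1 [] (rev \<tau>) []"
    using no_pop[OF False] by blast
  then have "SC pat_u32_1 \<tau> = rev \<tau>" unfolding SC_def by simp
  moreover have "avoids \<tau> pat_u123" using False u123_imp unfolding avoids_def by blast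
  ultimately show ?thesis using no231_rev unfolding avoids_def by simp
qed

lemma mset_sc: "mset (sc_aux \<sigma> xs [] []) = mset xs"
  using sc_aux_out[of \<sigma> xs "[]" "[]"] by auto

lemma knuth_final:
  assumes "distinct \<pi>" "set \<pi> = {1..n}"
  shows "west_s \<pi> = [1..<Suc n] \<longleftrightarrow> no231 \<pi>"
proof -
  have k: "sorted (sc_aux pat_21 \<pi> [] []) \<longleftrightarrow> no231 \<pi>"
    using knuth_inv[of pat_21 "[]" "[]" \<pi>] assms(1) by simp
  have ws: "west_s \<pi> = sc_aux pat_21 \<pi> [] []" unfolding west_s_def SC_def by simp
  have m: "mset (west_s \<pi>) = mset \<pi>" unfolding ws by (rule mset_sc)
  have d: "distinct (west_s \<pi>)" using mset_eq_imp_distinct_iff[OF m] assms(1) by simp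
  have s: "set (west_s \<pi>) = {1..n}" using mset_eq_setD[OF m] assms(2) by simp
  show ?thesis
  proof
    assume A: "west_s \<pi> = [1..<Suc n]"
    have "sorted (west_s \<pi>)" unfolding A by (rule sorted_upt)
    then show "no231 \<pi>" using k ws by simp
  next
    assume "no231 \<pi>"
    then have "sorted (west_s \<pi>)" using k ws by simp
    moreover have "sorted [1..<Suc n]" by (rule sorted_upt)
    moreover have "distinct [1..<Suc n]" by (rule distinct_upt)
    moreover have "set [1..<Suc n] = {1..n}" by auto
    ultimately show "west_s \<pi> = [1..<Suc n]" using d s sorted_distinct_set_unique[of "west_s \<pi>" "[1..<Suc n]"] by (simp del: upt_Suc)
  qed
qed

theorem mainTheorem5:
  fixes n :: nat
  assumes "n \<ge> 1"
  shows "Sort_n n pat_u32_1 = Av_n n [pat_u123, pat_132]"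
proof -
  have "\<tau> \<in> Sort_n n pat_u32_1 \<longleftrightarrow> \<tau> \<in> Av_n n [pat_u123, pat_132]" for \<tau>
  proof (cases "\<tau> \<in> permutations_of_set {1..n}")
    case True
    then have d: "distinct \<tau>" and s: "set \<tau> = {1..n}" by (auto simp: permutations_of_set_def)
    have m: "mset (SC pat_u32_1 \<tau>) = mset \<tau>" unfolding SC_def by (rule mset_sc)
    have d': "distinct (SC pat_u32_1 \<tau>)" using mset_eq_imp_distinct_iff[OF m] d by simp
    have s': "set (SC pat_u32_1 \<tau>) = {1..n}" using mset_eq_setD[OF m] s by simp
    have "\<tau> \<in> Sort_n n pat_u32_1 \<longleftrightarrow> no231 (SC pat_u32_1 \<tau>)"
      unfolding Sort_n_def using True knuth_final[OF d' s'] by simp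
    also have "\<dots> \<longleftrightarrow> avoids \<tau> pat_u123 \<and> avoids \<tau> pat_132" by (rule main_char[OF d])
    also have "\<dots> \<longleftrightarrow> \<tau> \<in> Av_n n [pat_u123, pat_132]" unfolding Av_n_def using True by simp
    finally show ?thesis .
  next
    case False
    then show ?thesis unfolding Sort_n_def Av_n_def by simp
  qed
  then show ?thesis by blast
qed


end
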